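(* Consider the planar ODE system $$\frac{du}{dt}=a_1u-b_1u^2-c_1uv,\qquad \frac{dv}{dt}=\frac{a_2v}{1+ku}-b_2v^2-c_2uv,$$ with positive parameters $a_1,a_2,b_1,b_2,c_1,c_2$ and fear coefficient $k\ge 0$. Suppose that for $k=0$ the system is in the weak competition setting, i.e. $\frac{c_2}{b_1}<\frac{a_2}{a_1}<\frac{b_2}{c_1}$ and $b_1b_2-c_1c_2>0$, and moreover $b_2b_1>2c_1c_2$. Then for every fear coefficient $k$ with $$k>k_c=\frac{1}{a_1^2c_2}\left(b_1^2a_2-a_1c_2b_1\right),$$ the equilibrium $(\frac{a_1}{b_1},0)$ is globally asymptotically stable (i.e. $u$ competitively excludes $v$).
   Context: $u,v\ge 0$ are population densities of two competing species; $v$ is "fearful" of $u$, modeled by the factor $\frac{1}{1+ku}$ in the growth rate of $v$. Global asymptotic stability refers to solutions with positive initial data. *)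

theory Defs
  imports "HOL-Analysis.Analysis"
begin

definition fear_solution ::
  "real \<Rightarrow> real \<Rightarrow> real \<Rightarrow> real \<Rightarrow> real \<Rightarrow> real \<Rightarrow> real \<Rightarrow>
   (real \<Rightarrow> real) \<Rightarrow> (real \<Rightarrow> real) \<Rightarrow> bool" where
  "fear_solution a1 a2 b1 b2 c1 c2 k u v \<longleftrightarrow>
     (\<forall>t\<ge>0.
        (u has_real_derivative (a1 * u t - b1 * (u t)^2 - c1 * u t * v t)) (at t within {0..}) \<and>
        (v has_real_derivative (a2 * v t / (1 + k * u t) - b2 * (v t)^2 - c2 * u t * v t))
           (at t within {0..}))"

definition gas_positive ::
  "((real \<Rightarrow> real) \<Rightarrow> (real \<Rightarrow> real) \<Rightarrow> bool) \<Rightarrow> real \<Rightarrow> real \<Rightarrow> bool" where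
  "gas_positive sol ue ve \<longleftrightarrow>
     (\<forall>e>0. \<exists>d>0. \<forall>u v. sol u v \<and> u 0 > 0 \<and> v 0 > 0 \<and> dist (u 0, v 0) (ue, ve) < d \<longrightarrow>
         (\<forall>t\<ge>0. dist (u t, v t) (ue, ve) < e)) \<and>
     (\<forall>u v. sol u v \<and> u 0 > 0 \<and> v 0 > 0 \<longrightarrow>
         ((\<lambda>t. (u t, v t)) \<longlongrightarrow> (ue, ve)) at_top)"

end

theory Submission
  imports Defs
begin

lemma deriv_cont:
  assumes "\<And>t. t \<ge> 0 \<Longrightarrow> (f has_real_derivative f' t) (at t within {0..})"
  shows "continuous_on {0..} f"
  using assms by (metis DERIV_continuous atLeast_iff continuous_on_eq_continuous_within)

lemma mvt0:
  assumes d: "\<And>t. t \<ge> 0 \<Longrightarrow> (f has_real_derivative f' t) (at t within {0..})"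
    and "0 \<le> a" "a < b"
  shows "\<exists>x. a < x \<and> x < b \<and> f b - f a = f' x * (b - a)"
proof -
  have "\<And>x. a \<le> x \<Longrightarrow> x \<le> b \<Longrightarrow> (f has_derivative (\<lambda>h. f' x * h)) (at x within {a..b})"
  proof -
    fix x assume "a \<le> x" "x \<le> b"
    then have "(f has_real_derivative f' x) (at x within {0..})" using d \<open>0 \<le> a\<close> by auto
    then have "(f has_real_derivative f' x) (at x within {a..b})"
      by (rule has_field_derivative_subset) (use \<open>0 \<le> a\<close> in auto)
    then show "(f has_derivative (\<lambda>h. f' x * h)) (at x within {a..b})"
      by (simp add: has_field_derivative_def)
  qed
  from mvt_simple[OF \<open>a < b\<close> this] show ?thesis by (auto simp: mult.commute)
qed

lemma first_time:
  fixes f :: "real \<Rightarrow> real"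
  assumes c: "continuous_on {0..} f" and "f 0 < l" "t1 \<ge> 0" "f t1 \<ge> l"
  shows "\<exists>s>0. s \<le> t1 \<and> f s \<ge> l \<and> (\<forall>t. 0 \<le> t \<and> t < s \<longrightarrow> f t < l)"
proof -
  let ?S = "{0..} \<inter> f -` {l..}"
  have cl: "closed ?S" by (rule continuous_closed_preimage[OF c]) auto
  have ne: "?S \<noteq> {}" using assms by auto
  have bb: "bdd_below ?S" by (rule bdd_belowI[of _ 0]) auto
  have sS: "Inf ?S \<in> ?S" using closed_contains_Inf[OF ne bb cl] .
  have le: "Inf ?S \<le> t1" by (rule cInf_lower[OF _ bb]) (use assms in auto)
  have "Inf ?S \<noteq> 0" using sS assms by auto
  then have pos: "Inf ?S > 0" using sS by auto
  have "\<forall>t. 0 \<le> t \<and> t < Inf ?S \<longrightarrow> f t < l"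
  proof (intro allI impI)
    fix t assume "0 \<le> t \<and> t < Inf ?S"
    then have "t \<notin> ?S" using cInf_lower[OF _ bb, of t] by auto
    then show "f t < l" using \<open>0 \<le> t \<and> t < Inf ?S\<close> by auto
  qed
  then show ?thesis using pos le sS by auto
qed

lemma last_time:
  fixes f :: "real \<Rightarrow> real"
  assumes c: "continuous_on {0..} f" and "0 \<le> a" "a \<le> b" "f a \<le> l" "f b > l"
  shows "\<exists>s. a \<le> s \<and> s < b \<and> f s \<le> l \<and> (\<forall>t. s < t \<and> t \<le> b \<longrightarrow> f t > l)"
proof -
  let ?S = "{a..b} \<inter> f -` {..l}"
  have c2: "continuous_on {a..b} f" using c by (rule continuous_on_subset) (use assms in auto)
  have cl: "closed ?S" by (rule continuous_closed_preimage[OF c2]) auto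
  have ne: "?S \<noteq> {}" using assms by auto
  have bb: "bdd_above ?S" by (rule bdd_aboveI[of _ b]) auto
  have sS: "Sup ?S \<in> ?S" using closed_contains_Sup[OF ne bb cl] .
  have le: "a \<le> Sup ?S" by (rule cSup_upper[OF _ bb]) (use assms in auto)
  have "Sup ?S \<noteq> b" using sS assms by auto
  then have lt: "Sup ?S < b" using sS by auto
  have "\<forall>t. Sup ?S < t \<and> t \<le> b \<longrightarrow> f t > l"
  proof (intro allI impI)
    fix t assume h: "Sup ?S < t \<and> t \<le> b"
    then have "t \<notin> ?S" using cSup_upper[OF _ bb, of t] by auto
    then show "f t > l" using h le by auto
  qed
  then show ?thesis using lt le sS by auto
qed

lemma barrier:
  fixes f :: "real \<Rightarrow> real"
  assumes d: "\<And>t. t \<ge> 0 \<Longrightarrow> (f has_real_derivative f' t) (at t within {0..})"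
    and T: "T \<ge> 0" and dl: "\<delta> > 0" and h: "\<And>t. t \<ge> T \<Longrightarrow> f t > c \<Longrightarrow> f' t \<le> -\<delta>"
  shows "\<exists>T'. \<forall>t\<ge>T'. f t \<le> c"
proof -
  have c: "continuous_on {0..} f" using deriv_cont[OF d] .
  have "\<exists>t0\<ge>T. f t0 \<le> c"
  proof (rule ccontr)
    assume "\<not> ?thesis"
    then have gt: "\<And>t. t \<ge> T \<Longrightarrow> f t > c" by force
    define t where "t = T + (f T - c) / \<delta> + 1"
    have "f T > c" using gt by auto
    then have tT: "t > T" using dl unfolding t_def by (simp add: field_simps)
    obtain x where x: "T < x" "x < t" "f t - f T = f' x * (t - T)" using mvt0[OF d T tT] by auto
    have "f' x \<le> -\<delta>" using h gt x by auto
    then have "f' x * (t - T) \<le> -\<delta> * (t - T)" using tT by (intro mult_right_mono) auto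
    also have "\<dots> = -(f T - c) - \<delta>" unfolding t_def using dl by (simp add: field_simps)
    finally have "f t \<le> c - \<delta>" using x by linarith
    then show False using gt[of t] tT dl by auto
  qed
  then obtain t0 where t0: "t0 \<ge> T" "f t0 \<le> c" by auto
  have "\<forall>t\<ge>t0. f t \<le> c"
  proof (intro allI impI, rule ccontr)
    fix t1 assume "t0 \<le> t1" "\<not> f t1 \<le> c"
    then obtain s where s: "t0 \<le> s" "s < t1" "f s \<le> c" "\<forall>t. s < t \<and> t \<le> t1 \<longrightarrow> f t > c"
      using last_time[OF c, of t0 t1 c] t0 T by auto
    obtain x where x: "s < x" "x < t1" "f t1 - f s = f' x * (t1 - s)" using mvt0[OF d _ s(2)] s t0 T by auto
    have "f' x \<le> -\<delta>" using h s x t0 by auto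
    then have "f' x * (t1 - s) \<le> 0" using s dl by (intro mult_nonpos_nonneg) auto
    then show False using x s \<open>\<not> f t1 \<le> c\<close> by auto
  qed
  then show ?thesis by auto
qed

lemma pos_lemma:
  fixes x G :: "real \<Rightarrow> real"
  assumes d: "\<And>t. t\<ge>0 \<Longrightarrow> (x has_real_derivative x t * G t) (at t within {0..})"
    and cG: "continuous_on {0..} G" and x0: "x 0 > 0" and t: "t \<ge> 0"
  shows "x t > 0"
proof (rule ccontr)
  assume "\<not> x t > 0"
  have cx: "continuous_on {0..} x" using deriv_cont[OF d] .
  have cmx: "continuous_on {0..} (\<lambda>t. - x t)" using cx by (intro continuous_intros)
  obtain s where s: "s > 0" "- x s \<ge> 0" "\<forall>\<tau>. 0 \<le> \<tau> \<and> \<tau> < s \<longrightarrow> - x \<tau> < 0"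
    using first_time[OF cmx, of 0 t] x0 t \<open>\<not> x t > 0\<close> by auto
  have "continuous_on {0..s} G" using cG by (rule continuous_on_subset) auto
  then obtain B where B: "\<And>\<tau>. \<tau> \<in> {0..s} \<Longrightarrow> norm (G \<tau>) \<le> B"
    using continuous_on_compact_bound[of "{0..s}" G] by auto
  define z where "z = (\<lambda>\<tau>. x \<tau> * exp (B * \<tau>))"
  have dz: "(z has_real_derivative (x \<tau> * exp (B * \<tau>) * (G \<tau> + B))) (at \<tau> within {0..})"
    if "\<tau> \<ge> 0" for \<tau>
    unfolding z_def
    by (rule derivative_eq_intros d[OF that] refl | simp add: algebra_simps)+
  obtain \<xi> where xi: "0 < \<xi>" "\<xi> < s" "z s - z 0 = x \<xi> * exp (B * \<xi>) * (G \<xi> + B) * (s - 0)"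
    using mvt0[OF dz, of 0 s] s by auto
  have "G \<xi> + B \<ge> 0" using B[of \<xi>] xi by auto
  moreover have "x \<xi> > 0" using s xi by auto
  ultimately have "z s - z 0 \<ge> 0" using xi by (simp add: zero_le_mult_iff)
  then have "z s > 0" using x0 unfolding z_def by simp
  then show False using s unfolding z_def by (simp add: mult_le_0_iff zero_less_mult_iff)
qed

lemma dL_gen:
  assumes du: "(u has_real_derivative U) (at t within {0..})"
   and dv: "(v has_real_derivative V) (at t within {0..})"
  shows "((\<lambda>t. (u t - c)^2 + v t) has_real_derivative (2 * (u t - c) * U + V)) (at t within {0..})"
proof -
  have "((\<lambda>t. u t - c) has_real_derivative (U - 0)) (at t within {0..})"
    by (intro DERIV_diff du DERIV_const)
  then have "((\<lambda>t. (u t - c)^2) has_real_derivative (of_nat 2 * ((U - 0) * (u t - c) ^ (2 - Suc 0)))) (at t within {0..})"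
    by (rule DERIV_power)
  from DERIV_add[OF this dv] show ?thesis by (simp add: algebra_simps)
qed

lemma half_gt: "(q::real) < M \<Longrightarrow> q < (M + q) / 2" by (simp add: field_simps)

context
  fixes a1 a2 b1 b2 c1 c2 k :: real and u v :: "real \<Rightarrow> real"
  assumes pa1: "a1 > 0" and pa2: "a2 > 0" and pb1: "b1 > 0" and pb2: "b2 > 0"
    and pc1: "c1 > 0" and pc2: "c2 > 0" and pk: "k \<ge> 0"
    and sol: "fear_solution a1 a2 b1 b2 c1 c2 k u v" and u0: "u 0 > 0" and v0: "v 0 > 0"
begin

lemma du: "t \<ge> 0 \<Longrightarrow> (u has_real_derivative (a1 * u t - b1 * (u t)^2 - c1 * u t * v t)) (at t within {0..})"
  using sol unfolding fear_solution_def by blast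

lemma dv: "t \<ge> 0 \<Longrightarrow> (v has_real_derivative (a2 * v t / (1 + k * u t) - b2 * (v t)^2 - c2 * u t * v t)) (at t within {0..})"
  using sol unfolding fear_solution_def by blast

lemma cu: "continuous_on {0..} u" using deriv_cont[OF du] .
lemma cv: "continuous_on {0..} v" using deriv_cont[OF dv] .

lemma upos: "t \<ge> 0 \<Longrightarrow> u t > 0"
proof -
  assume t: "t \<ge> 0"
  have d: "(u has_real_derivative u s * (a1 - b1 * u s - c1 * v s)) (at s within {0..})" if "s \<ge> 0" for s
    by (rule DERIV_cong[OF du[OF that]]) (simp add: algebra_simps power2_eq_square)
  have c: "continuous_on {0..} (\<lambda>s. a1 - b1 * u s - c1 * v s)"
    using cu cv by (intro continuous_intros)
  show ?thesis using pos_lemma[OF d c u0 t] .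
qed

lemma vpos: "t \<ge> 0 \<Longrightarrow> v t > 0"
proof -
  assume t: "t \<ge> 0"
  have d: "(v has_real_derivative v s * (a2 / (1 + k * u s) - b2 * v s - c2 * u s)) (at s within {0..})" if "s \<ge> 0" for s
    by (rule DERIV_cong[OF dv[OF that]]) (simp add: algebra_simps power2_eq_square)
  have nz: "\<forall>s\<in>{0..}. 1 + k * u s \<noteq> 0"
    using upos pk by (metis add_pos_nonneg atLeast_iff less_numeral_extra(1) mult_nonneg_nonneg order_less_imp_le order_less_irrefl)
  have c: "continuous_on {0..} (\<lambda>s. a2 / (1 + k * u s) - b2 * v s - c2 * u s)"
    using cu cv nz by (intro continuous_intros) auto
  show ?thesis using pos_lemma[OF d c v0 t] .
qed

lemma E1:
  assumes e: "\<epsilon> > 0"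
  shows "\<exists>T. \<forall>t\<ge>T. u t \<le> a1 / b1 + \<epsilon>"
proof -
  let ?c = "a1 / b1 + \<epsilon>"
  have cpos: "?c > 0" using pa1 pb1 e by (intro add_pos_pos divide_pos_pos)
  show ?thesis
  proof (rule barrier[OF du order_refl])
    show "?c * b1 * \<epsilon> > 0" using cpos pb1 e by auto
    fix t :: real assume t: "t \<ge> 0" and gt: "u t > ?c"
    have "b1 * u t > b1 * ?c" using gt pb1 by auto
    moreover have "b1 * ?c = a1 + b1 * \<epsilon>" using pb1 by (simp add: field_simps)
    ultimately have "a1 - b1 * u t < - b1 * \<epsilon>" by linarith
    moreover have "c1 * u t * v t \<ge> 0" using upos[OF t] vpos[OF t] pc1 by simp
    moreover have "(a1 + b1 * \<epsilon>) * u t \<le> (b1 * u t) * u t"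
      using upos[OF t] \<open>a1 - b1 * u t < - b1 * \<epsilon>\<close> by (intro mult_right_mono) auto
    ultimately have "a1 * u t - b1 * (u t)^2 - c1 * u t * v t \<le> u t * (- b1 * \<epsilon>)"
      by (simp add: power2_eq_square algebra_simps)
    also have "\<dots> \<le> ?c * (- b1 * \<epsilon>)"
      using gt pb1 e by (intro mult_right_mono_neg) auto
    finally show "a1 * u t - b1 * (u t)^2 - c1 * u t * v t \<le> - (?c * b1 * \<epsilon>)" by simp
  qed
qed


lemma E2:
  assumes vb: "\<exists>T. \<forall>t\<ge>T. v t \<le> m" and ul: "ul > 0" and gap: "a1 - c1 * m - b1 * ul > 0"
  shows "\<exists>T. \<forall>t\<ge>T. u t \<ge> ul"
proof -
  obtain T0 where T0: "\<forall>t\<ge>T0. v t \<le> m" using vb by auto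
  have d: "((\<lambda>t. - ln (u t)) has_real_derivative (- (a1 - b1 * u t - c1 * v t))) (at t within {0..})"
    if "t \<ge> 0" for t
  proof -
    have "((\<lambda>t. ln (u t)) has_real_derivative inverse (u t) * (a1 * u t - b1 * (u t)^2 - c1 * u t * v t)) (at t within {0..})"
      by (rule DERIV_chain2[OF DERIV_ln[OF upos[OF that]] du[OF that]])
    then have "((\<lambda>t. - ln (u t)) has_real_derivative - (inverse (u t) * (a1 * u t - b1 * (u t)^2 - c1 * u t * v t))) (at t within {0..})"
      by (rule DERIV_minus)
    then show ?thesis
      by (rule DERIV_cong) (use upos[OF that] in \<open>simp add: field_simps power2_eq_square\<close>)
  qed
  have "\<exists>T'. \<forall>t\<ge>T'. - ln (u t) \<le> - ln ul"
  proof (rule barrier[OF d, of "max T0 0" "a1 - c1 * m - b1 * ul"])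
    show "0 \<le> max T0 0" by simp
    show "0 < a1 - c1 * m - b1 * ul" using gap .
    fix t assume t: "max T0 0 \<le> t" and lt: "- ln ul < - ln (u t)"
    have ut: "u t > 0" using upos t by auto
    have "u t < ul" using lt ut ul by simp
    then have "b1 * u t \<le> b1 * ul" using pb1 by simp
    moreover have "c1 * v t \<le> c1 * m" using T0 t pc1 by simp
    ultimately show "- (a1 - b1 * u t - c1 * v t) \<le> - (a1 - c1 * m - b1 * ul)" by linarith
  qed
  then obtain T' where T': "\<forall>t\<ge>T'. - ln (u t) \<le> - ln ul" by auto
  have "\<forall>t\<ge>max T' 0. u t \<ge> ul"
  proof (intro allI impI)
    fix t assume t: "max T' 0 \<le> t"
    then have "- ln (u t) \<le> - ln ul" using T' by auto
    then show "u t \<ge> ul" using upos[of t] t ul by simp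
  qed
  then show ?thesis by blast
qed

lemma E3:
  assumes ub: "\<exists>T. \<forall>t\<ge>T. u t \<ge> ul" and ul: "ul \<ge> 0" and m: "m > 0"
    and gap: "a2 / (1 + k * ul) - c2 * ul - b2 * m < 0"
  shows "\<exists>T. \<forall>t\<ge>T. v t \<le> m"
proof -
  obtain T0 where T0: "\<forall>t\<ge>T0. u t \<ge> ul" using ub by auto
  let ?\<eta> = "- (a2 / (1 + k * ul) - c2 * ul - b2 * m)"
  show ?thesis
  proof (rule barrier[OF dv, of "max T0 0" "m * ?\<eta>"])
    show "0 \<le> max T0 0" by simp
    show "0 < m * ?\<eta>" using gap m by simp
    fix t assume t: "max T0 0 \<le> t" and gt: "m < v t"
    have ut: "u t \<ge> ul" using T0 t by auto
    have "1 + k * ul \<le> 1 + k * u t" using ut pk by (simp add: mult_left_mono)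
    moreover have "1 + k * ul > 0" using ul pk by (simp add: add_pos_nonneg)
    ultimately have "a2 / (1 + k * u t) \<le> a2 / (1 + k * ul)"
      using pa2 by (intro divide_left_mono) auto
    moreover have "c2 * ul \<le> c2 * u t" using ut pc2 by simp
    moreover have "b2 * m \<le> b2 * v t" using gt pb2 by simp
    ultimately have A: "a2 / (1 + k * u t) - b2 * v t - c2 * u t \<le> - ?\<eta>" by linarith
    have vt: "v t > 0" using gt m by auto
    have "a2 * v t / (1 + k * u t) - b2 * (v t)^2 - c2 * u t * v t
        = v t * (a2 / (1 + k * u t) - b2 * v t - c2 * u t)"
      by (simp add: field_simps power2_eq_square)
    also have "\<dots> \<le> v t * (- ?\<eta>)" using A vt by (intro mult_left_mono) auto
    also have "\<dots> \<le> m * (- ?\<eta>)" using gt gap by (intro mult_right_mono_neg) auto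
    finally show "a2 * v t / (1 + k * u t) - b2 * (v t)^2 - c2 * u t * v t \<le> - (m * ?\<eta>)" by (simp add: algebra_simps)
  qed
qed


lemma Dneg:
  assumes h1: "a2 * c1 < a1 * b2" and hk: "a2 / (1 + k * (a1 / b1)) - c2 * (a1 / b1) < 0"
    and x: "0 \<le> x" "x \<le> a1 / b1"
  shows "a2 / (1 + k * x) - c2 * x < b2 * (a1 - b1 * x) / c1"
proof -
  define ub where "ub = a1 / b1"
  have ubp: "ub > 0" using pa1 pb1 unfolding ub_def by simp
  have a1eq: "a1 = b1 * ub" using pb1 unfolding ub_def by simp
  have kx: "k * x \<le> k * ub" using mult_left_mono[OF x(2) pk] unfolding ub_def .
  have p1: "1 + k * x > 0" using x pk by (simp add: add_pos_nonneg)
  have "k * x / (1 + k * ub) \<le> k * x / (1 + k * x)"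
    using kx p1 x pk by (intro divide_left_mono) auto
  also have "\<dots> = 1 - 1 / (1 + k * x)" using p1 by (simp add: field_simps)
  finally have "1 / (1 + k * x) \<le> 1 - k * x / (1 + k * ub)" by simp
  then have "a2 * (1 / (1 + k * x)) \<le> a2 * (1 - k * x / (1 + k * ub))"
    using pa2 by (intro mult_left_mono) auto
  then have L: "a2 / (1 + k * x) \<le> a2 - a2 * k / (1 + k * ub) * x" by (simp add: algebra_simps)
  define A where "A = a2 - b2 * a1 / c1"
  define B where "B = - (a2 * k / (1 + k * ub)) - c2 + b2 * b1 / c1"
  have An: "A < 0" using h1 pc1 unfolding A_def by (simp add: field_simps)
  have pu: "1 + k * ub > 0" using pk ubp by (simp add: add_pos_nonneg)
  have e1: "a2 - a2 * k / (1 + k * ub) * ub = a2 / (1 + k * ub)" using pu by (simp add: field_simps)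
  have e2: "b2 * a1 / c1 = b2 * b1 / c1 * ub" using a1eq by simp
  have "A + B * ub = (a2 - a2 * k / (1 + k * ub) * ub) - c2 * ub + (b2 * b1 / c1 * ub - b2 * a1 / c1)"
    unfolding A_def B_def by (simp add: ring_distribs)
  then have "A + B * ub = a2 / (1 + k * ub) - c2 * ub" using e1 e2 by linarith
  then have ABn: "A + B * ub < 0" using hk unfolding ub_def by simp
  have "A + B * x < 0"
  proof (cases "B \<ge> 0")
    case True
    have "B * x \<le> B * ub" using mult_left_mono[OF x(2) True] unfolding ub_def .
    then show ?thesis using ABn by linarith
  next
    case False
    then have "B * x \<le> 0" using x by (simp add: mult_nonpos_nonneg)
    then show ?thesis using An by linarith
  qed
  moreover have "b2 * (a1 - b1 * x) / c1 = a2 - A - (b2 * b1 / c1) * x"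
    unfolding A_def using pc1 by (simp add: field_simps)
  ultimately show ?thesis using L unfolding B_def by (simp add: algebra_simps)
qed

lemma Lip:
  assumes "0 \<le> y" "y \<le> x"
  shows "a2 / (1 + k * y) - c2 * y \<le> a2 / (1 + k * x) - c2 * x + (a2 * k + c2) * (x - y)"
proof -
  have py: "1 + k * y \<ge> 1" using assms pk by simp
  have px: "1 + k * x \<ge> 1" using assms pk by simp
  have "a2 / (1 + k * y) - a2 / (1 + k * x) = a2 * k * (x - y) / ((1 + k * y) * (1 + k * x))"
    using py px by (simp add: field_simps)
  also have "\<dots> \<le> a2 * k * (x - y) / 1"
  proof (rule divide_left_mono)
    have "0 \<le> 1 + k * y" using py by simp
    then show "1 \<le> (1 + k * y) * (1 + k * x)" using mult_mono[OF py px _ zero_le_one] by simp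
    show "0 \<le> a2 * k * (x - y)" using assms pa2 pk by simp
    show "0 < (1 + k * y) * (1 + k * x) * 1" using py px by simp
  qed
  finally show ?thesis by (simp add: algebra_simps)
qed


lemma v_to_0:
  assumes h1: "a2 * c1 < a1 * b2" and hk: "a2 / (1 + k * (a1 / b1)) - c2 * (a1 / b1) < 0"
    and e: "\<epsilon> > 0"
  shows "\<exists>T. \<forall>t\<ge>T. v t \<le> \<epsilon>"
proof -
  define S where "S = {m. m > 0 \<and> (\<exists>T. \<forall>t\<ge>T. v t \<le> m)}"
  have u_ge0: "\<exists>T. \<forall>t\<ge>T. u t \<ge> 0" using upos by (intro exI[of _ 0]) (auto intro: less_imp_le)
  have big: "m \<in> S" if "m > a2 / b2" for m
  proof -
    have "a2 / (1 + k * 0) - c2 * 0 - b2 * m < 0" using that pb2 by (simp add: field_simps)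
    moreover have "m > 0" using that pa2 pb2 by (smt (verit) divide_pos_pos)
    ultimately show ?thesis using E3[OF u_ge0 order_refl] unfolding S_def by auto
  qed
  have ne: "S \<noteq> {}" using big[of "a2 / b2 + 1"] by auto
  have bb: "bdd_below S" unfolding S_def by (rule bdd_belowI[of _ 0]) auto
  define M where "M = Inf S"
  have M0: "M \<ge> 0" unfolding M_def by (rule cInf_greatest[OF ne]) (auto simp: S_def)
  have Mle: "M \<le> a2 / b2"
  proof (rule ccontr)
    assume "\<not> M \<le> a2 / b2"
    then have "(M + a2 / b2) / 2 > a2 / b2" using half_gt[of "a2 / b2" M] by simp
    then have "(M + a2 / b2) / 2 \<in> S" by (intro big)
    then have "M \<le> (M + a2 / b2) / 2" unfolding M_def using cInf_lower[OF _ bb] by blast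
    then show False using \<open>\<not> M \<le> a2 / b2\<close> by auto
  qed
  have "M = 0"
  proof (rule ccontr)
    assume "M \<noteq> 0"
    then have Mp: "M > 0" using M0 by auto
    define us where "us = (a1 - c1 * M) / b1"
    have "c1 * M \<le> c1 * (a2 / b2)" using mult_left_mono[OF Mle] pc1 by simp
    also have "\<dots> < a1" using h1 pb2 by (simp add: field_simps)
    finally have "c1 * M < a1" .
    then have usp: "us > 0" unfolding us_def using pb1 by simp
    have usle: "us \<le> a1 / b1" unfolding us_def using pb1 pc1 Mp by (simp add: divide_right_mono)
    have a1us: "a1 - c1 * M - b1 * us = 0" unfolding us_def using pb1 by simp
    define gs where "gs = a2 / (1 + k * us) - c2 * us"
    have "gs < b2 * (a1 - b1 * us) / c1" unfolding gs_def by (rule Dneg[OF h1 hk]) (use usp usle in auto)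
    also have "b2 * (a1 - b1 * us) / c1 = b2 * M" using a1us pc1 by (simp add: field_simps)
    finally have gsM: "gs < b2 * M" .
    define gap where "gap = b2 * M - gs"
    have gapp: "gap > 0" using gsM unfolding gap_def by simp
    define K where "K = a2 * k + c2"
    have Kp: "K > 0" unfolding K_def using pa2 pk pc2 by (simp add: add_nonneg_pos)
    define \<tau> where "\<tau> = min (us / 2) (gap / (2 * K))"
    have \<tau>p: "\<tau> > 0" unfolding \<tau>_def using usp gapp Kp by simp
    define ul where "ul = us - \<tau>"
    have ulp: "ul > 0" unfolding ul_def \<tau>_def using usp by simp
    have A: "a2 / (1 + k * ul) - c2 * ul \<le> gs + K * (us - ul)"
      unfolding gs_def K_def using Lip[of ul us] ulp \<tau>p unfolding ul_def by simp
    have "K * (us - ul) \<le> K * (gap / (2 * K))"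
      unfolding ul_def \<tau>_def using Kp by (intro mult_left_mono) auto
    also have "K * (gap / (2 * K)) = gap / 2" using Kp by simp
    finally have B: "K * (us - ul) \<le> gap / 2" .
    have X: "a2 / (1 + k * ul) - c2 * ul \<le> gs + gap / 2" using A B by (meson add_left_mono order_trans)
    have "gs + gap / 2 = b2 * M - gap / 2" unfolding gap_def by (simp add: field_simps)
    with X have gul: "a2 / (1 + k * ul) - c2 * ul \<le> b2 * M - gap / 2" by simp
    define \<eta> where "\<eta> = b1 * \<tau> / (2 * c1)"
    have \<eta>p: "\<eta> > 0" unfolding \<eta>_def using pb1 pc1 \<tau>p by simp
    have "Inf S < M + \<eta>" using \<eta>p unfolding M_def by simp
    then obtain m' where m': "m' \<in> S" "m' < M + \<eta>" using cInf_less_iff[OF ne bb] by auto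
    have "c1 * m' < c1 * (M + \<eta>)" using m' pc1 by simp
    also have "c1 * (M + \<eta>) = c1 * M + b1 * \<tau> / 2" unfolding \<eta>_def using pc1 by (simp add: field_simps)
    finally have c: "c1 * m' < c1 * M + b1 * \<tau> / 2" .
    have h: "b1 * \<tau> / 2 < b1 * \<tau>" using pb1 \<tau>p by simp
    have "b1 * ul = b1 * us - b1 * \<tau>" unfolding ul_def by (simp add: right_diff_distrib)
    then have "a1 - c1 * m' - b1 * ul > 0" using a1us c h by (smt (verit))
    moreover have "\<exists>T. \<forall>t\<ge>T. v t \<le> m'" using m' unfolding S_def by auto
    ultimately have ulb: "\<exists>T. \<forall>t\<ge>T. u t \<ge> ul" using E2 ulp by blast
    define m'' where "m'' = max (M / 2) (M - gap / (4 * b2))"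
    have m''p: "m'' > 0" unfolding m''_def using Mp by simp
    have m''M: "m'' < M" unfolding m''_def using Mp gapp pb2 by simp
    have "b2 * (M - gap / (4 * b2)) \<le> b2 * m''" unfolding m''_def using pb2 by (intro mult_left_mono) auto
    then have "b2 * M - gap / 4 \<le> b2 * m''" using pb2 by (simp add: right_diff_distrib)
    then have "a2 / (1 + k * ul) - c2 * ul - b2 * m'' < 0" using gul gapp by linarith
    then have "\<exists>T. \<forall>t\<ge>T. v t \<le> m''" using E3[OF ulb _ m''p] ulp by auto
    then have "m'' \<in> S" unfolding S_def using m''p by auto
    then have "M \<le> m''" unfolding M_def using cInf_lower[OF _ bb] by blast
    then show False using m''M by simp
  qed
  then have "Inf S < \<epsilon>" using e unfolding M_def by simp
  then obtain m where "m \<in> S" "m < \<epsilon>" using cInf_less_iff[OF ne bb] by auto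
  then show ?thesis unfolding S_def by force
qed

lemma u_lower:
  assumes h1: "a2 * c1 < a1 * b2" and hk: "a2 / (1 + k * (a1 / b1)) - c2 * (a1 / b1) < 0"
    and e: "\<epsilon> > 0"
  shows "\<exists>T. \<forall>t\<ge>T. u t \<ge> a1 / b1 - \<epsilon>"
proof (cases "\<epsilon> < a1 / b1")
  case True
  define m where "m = b1 * \<epsilon> / (2 * c1)"
  have mp: "m > 0" unfolding m_def using pb1 pc1 e by simp
  have eq: "a1 - c1 * m - b1 * (a1 / b1 - \<epsilon>) = b1 * \<epsilon> / 2"
    unfolding m_def using pb1 pc1 by (simp add: field_simps)
  have "b1 * \<epsilon> / 2 > 0" using pb1 e by simp
  then have "a1 - c1 * m - b1 * (a1 / b1 - \<epsilon>) > 0" using eq by linarith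
  then show ?thesis using E2[OF v_to_0[OF h1 hk mp]] True by simp
next
  case False
  then show ?thesis using upos by (intro exI[of _ 0]) (smt (verit))
qed


lemma Lder_nonpos:
  assumes x: "x > 0" and y: "y > 0" and r: "\<bar>x - a1 / b1\<bar> < \<rho>" "\<rho> \<le> a1 / b1"
    and rc: "\<rho> * (a2 * k + c2 + 4 * c1 * (a1 / b1)) \<le> - (a2 / (1 + k * (a1 / b1)) - c2 * (a1 / b1)) / 2"
    and hk: "a2 / (1 + k * (a1 / b1)) - c2 * (a1 / b1) < 0"
  shows "2 * (x - a1 / b1) * (a1 * x - b1 * x^2 - c1 * x * y) + (a2 * y / (1 + k * x) - b2 * y^2 - c2 * x * y) \<le> 0"
proof -
  define ub where "ub = a1 / b1"
  define H where "H = a2 / (1 + k * ub) - c2 * ub"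
  define K where "K = a2 * k + c2"
  have ubp: "ub > 0" unfolding ub_def using pa1 pb1 by simp
  have a1eq: "a1 = b1 * ub" unfolding ub_def using pb1 by simp
  have Hn: "H < 0" using hk unfolding H_def ub_def .
  have rc': "\<rho> * (K + 4 * c1 * ub) \<le> - H / 2" using rc unfolding K_def H_def ub_def .
  have px: "1 + k * x > 0" using x pk by (simp add: add_pos_nonneg)
  have pu: "1 + k * ub > 0" using ubp pk by (simp add: add_pos_nonneg)
  have rp: "\<rho> > 0" using r by linarith
  have hb: "a2 / (1 + k * x) - c2 * x \<le> H + K * \<rho>"
  proof (cases "x \<le> ub")
    case True
    have "a2 / (1 + k * x) - c2 * x \<le> H + K * (ub - x)"
      unfolding H_def K_def using Lip[of x ub] x True by simp
    moreover have "K * (ub - x) \<le> K * \<rho>"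
      using r True unfolding K_def ub_def using pa2 pk pc2
      by (intro mult_left_mono) (auto intro: add_nonneg_nonneg)
    ultimately show ?thesis by linarith
  next
    case False
    have "1 + k * ub \<le> 1 + k * x" using False pk by (simp add: mult_left_mono)
    then have "a2 / (1 + k * x) \<le> a2 / (1 + k * ub)" using pa2 pu by (intro divide_left_mono) auto
    moreover have "c2 * ub \<le> c2 * x" using False pc2 by simp
    moreover have "K * \<rho> \<ge> 0" unfolding K_def using pa2 pk pc2 rp by simp
    ultimately show ?thesis unfolding H_def by linarith
  qed
  have xle: "x \<le> 2 * ub" using r unfolding ub_def by linarith
  have "(2 * c1 * x) * (- (x - ub)) \<le> (2 * c1 * x) * \<bar>x - ub\<bar>"
    using x pc1 by (intro mult_left_mono) auto
  moreover have "(2 * c1 * x) * (- (x - ub)) = - (2 * c1 * x * (x - ub))" by (simp only: mult_minus_right)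
  ultimately have "- (2 * c1 * x * (x - ub)) \<le> 2 * c1 * x * \<bar>x - ub\<bar>" by simp
  also have "\<dots> \<le> 2 * c1 * (2 * ub) * \<rho>"
  proof (rule mult_mono)
    show "2 * c1 * x \<le> 2 * c1 * (2 * ub)" using xle pc1 by simp
    show "\<bar>x - ub\<bar> \<le> \<rho>" using r unfolding ub_def by simp
    show "0 \<le> 2 * c1 * (2 * ub)" using pc1 ubp by simp
  qed simp
  finally have hc: "- (2 * c1 * x * (x - ub)) \<le> 4 * c1 * ub * \<rho>" by simp
  have br: "- (2 * c1 * x * (x - ub)) + (a2 / (1 + k * x) - c2 * x) \<le> 0"
  proof -
    have "- (2 * c1 * x * (x - ub)) + (a2 / (1 + k * x) - c2 * x) \<le> H + \<rho> * (K + 4 * c1 * ub)"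
      using hc hb by (simp add: algebra_simps)
    also have "\<dots> \<le> H + - H / 2" using rc' by simp
    also have "\<dots> \<le> 0" using Hn by simp
    finally show ?thesis .
  qed
  have eq: "2 * (x - ub) * (a1 * x - b1 * x^2 - c1 * x * y) + (a2 * y / (1 + k * x) - b2 * y^2 - c2 * x * y)
      = - (2 * b1 * x * (x - ub)^2) + y * (- (2 * c1 * x * (x - ub)) + (a2 / (1 + k * x) - c2 * x)) - b2 * y^2"
    unfolding a1eq using px by (simp add: field_simps power2_eq_square)
  have t1: "2 * b1 * x * (x - ub)^2 \<ge> 0" using pb1 x by simp
  have t2: "y * (- (2 * c1 * x * (x - ub)) + (a2 / (1 + k * x) - c2 * x)) \<le> 0"
    using y br by (simp add: mult_nonneg_nonpos)
  have t3: "b2 * y^2 \<ge> 0" using pb2 by simp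
  show ?thesis using eq t1 t2 t3 unfolding ub_def by linarith
qed


lemma L_inv:
  assumes hk: "a2 / (1 + k * (a1 / b1)) - c2 * (a1 / b1) < 0"
    and r: "0 < \<rho>" "\<rho> \<le> a1 / b1"
    and rc: "\<rho> * (a2 * k + c2 + 4 * c1 * (a1 / b1)) \<le> - (a2 / (1 + k * (a1 / b1)) - c2 * (a1 / b1)) / 2"
    and l: "l \<le> \<rho>^2" and L0: "(u 0 - a1 / b1)^2 + v 0 < l" and t: "t \<ge> 0"
  shows "(u t - a1 / b1)^2 + v t < l"
proof (rule ccontr)
  assume nt: "\<not> ?thesis"
  define L where "L = (\<lambda>t. (u t - a1 / b1)^2 + v t)"
  define L' where "L' = (\<lambda>t. 2 * (u t - a1 / b1) * (a1 * u t - b1 * (u t)^2 - c1 * u t * v t)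
      + (a2 * v t / (1 + k * u t) - b2 * (v t)^2 - c2 * u t * v t))"
  have dL: "(L has_real_derivative L' t) (at t within {0..})" if "t \<ge> 0" for t
    unfolding L_def L'_def by (rule dL_gen[OF du[OF that] dv[OF that]])
  have fL: "L 0 < l" using L0 unfolding L_def .
  have fLt: "L t \<ge> l" using nt unfolding L_def by simp
  obtain s where s: "s > 0" "L s \<ge> l" "\<forall>\<tau>. 0 \<le> \<tau> \<and> \<tau> < s \<longrightarrow> L \<tau> < l"
    using first_time[OF deriv_cont[OF dL] fL t fLt] by blast
  obtain \<xi> where xi: "0 < \<xi>" "\<xi> < s" "L s - L 0 = L' \<xi> * (s - 0)"
    using mvt0[OF dL, of 0 s] s(1) by blast
  have Lx: "L \<xi> < l" using s(3) xi(1,2) by simp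
  have vx: "v \<xi> > 0" using vpos[of \<xi>] xi(1) by simp
  have ux: "u \<xi> > 0" using upos[of \<xi>] xi(1) by simp
  have "(u \<xi> - a1 / b1)^2 + v \<xi> < l" using Lx unfolding L_def .
  then have w2: "(u \<xi> - a1 / b1)^2 < \<rho>^2" using vx l by linarith
  have ab: "\<bar>u \<xi> - a1 / b1\<bar> < \<rho>" using real_sqrt_less_mono[OF w2] r(1) by simp
  have "L' \<xi> \<le> 0" using Lder_nonpos[OF ux vx ab r(2) rc hk] unfolding L'_def .
  then have "L' \<xi> * (s - 0) \<le> 0" using s(1) by (intro mult_nonpos_nonneg) simp_all
  then have "L s \<le> L 0" using xi(3) by linarith
  then show False using s(2) fL by linarith
qed

lemma attract:
  assumes h1: "a2 * c1 < a1 * b2" and hk: "a2 / (1 + k * (a1 / b1)) - c2 * (a1 / b1) < 0"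
  shows "((\<lambda>t. (u t, v t)) \<longlongrightarrow> (a1 / b1, 0)) at_top"
proof (rule tendsto_Pair)
  show "(u \<longlongrightarrow> a1 / b1) at_top"
  proof (rule tendstoI)
    fix e :: real assume e: "e > 0"
    obtain T1 where T1: "\<forall>t\<ge>T1. u t \<le> a1 / b1 + e / 2" using E1[of "e / 2"] e by auto
    obtain T2 where T2: "\<forall>t\<ge>T2. u t \<ge> a1 / b1 - e / 2" using u_lower[OF h1 hk, of "e / 2"] e by auto
    have "\<forall>t\<ge>max T1 T2. dist (u t) (a1 / b1) < e"
    proof (intro allI impI)
      fix t assume tt: "max T1 T2 \<le> t"
      have A: "u t \<le> a1 / b1 + e / 2" using T1 tt by simp
      have B: "u t \<ge> a1 / b1 - e / 2" using T2 tt by simp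
      have "\<bar>u t - a1 / b1\<bar> \<le> e / 2" using A B by (simp only: abs_le_iff) linarith
      then show "dist (u t) (a1 / b1) < e" using e unfolding dist_real_def by simp
    qed
    then show "\<forall>\<^sub>F t in at_top. dist (u t) (a1 / b1) < e" unfolding eventually_at_top_linorder by blast
  qed
  show "(v \<longlongrightarrow> 0) at_top"
  proof (rule tendstoI)
    fix e :: real assume e: "e > 0"
    obtain T1 where T1: "\<forall>t\<ge>T1. v t \<le> e / 2" using v_to_0[OF h1 hk, of "e / 2"] e by auto
    have "\<forall>t\<ge>max T1 0. dist (v t) 0 < e"
    proof (intro allI impI)
      fix t assume tt: "max T1 0 \<le> t"
      have A: "v t \<le> e / 2" using T1 tt by simp
      have B: "v t > 0" using vpos[of t] tt by simp
      show "dist (v t) 0 < e" using A B e unfolding dist_real_def by simp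
    qed
    then show "\<forall>\<^sub>F t in at_top. dist (v t) 0 < e" unfolding eventually_at_top_linorder by blast
  qed
qed

end

theorem mainTheorem1:
  fixes a1 a2 b1 b2 c1 c2 k :: real
  assumes "a1 > 0" "a2 > 0" "b1 > 0" "b2 > 0" "c1 > 0" "c2 > 0" "k \<ge> 0"
    and "c2 / b1 < a2 / a1" "a2 / a1 < b2 / c1"
    and "b1 * b2 - c1 * c2 > 0"
    and "b2 * b1 > 2 * c1 * c2"
    and "k > (b1^2 * a2 - a1 * c2 * b1) / (a1^2 * c2)"
  shows "gas_positive (fear_solution a1 a2 b1 b2 c1 c2 k) (a1 / b1) 0"
proof -
  note P = assms(1-7)
  have h1: "a2 * c1 < a1 * b2" using assms(9) assms(1) assms(5) by (simp add: field_simps)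
  have kk: "k * (a1^2 * c2) > b1^2 * a2 - a1 * c2 * b1"
    using assms(12) assms(1) assms(6) by (simp add: pos_divide_less_eq)
  have hk: "a2 / (1 + k * (a1 / b1)) - c2 * (a1 / b1) < 0"
  proof -
    have p: "1 + k * (a1 / b1) > 0" using P by (simp add: add_pos_nonneg)
    have "a2 * b1^2 < c2 * a1 * b1 + k * c2 * a1^2" using kk by (simp add: algebra_simps)
    moreover have "b1^2 > 0" using P by simp
    ultimately have "a2 < (c2 * a1 * b1 + k * c2 * a1^2) / b1^2" by (simp add: pos_less_divide_eq)
    moreover have "c2 * (a1 / b1) * (1 + k * (a1 / b1)) = (c2 * a1 * b1 + k * c2 * a1^2) / b1^2"
      using P by (simp add: field_simps power2_eq_square)
    ultimately have "a2 < c2 * (a1 / b1) * (1 + k * (a1 / b1))" by simp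
    then have "a2 / (1 + k * (a1 / b1)) < c2 * (a1 / b1)" using p by (simp add: divide_less_eq)
    then show ?thesis by simp
  qed
  define ub where "ub = a1 / b1"
  have ubp: "ub > 0" unfolding ub_def using P by simp
  define H where "H = a2 / (1 + k * ub) - c2 * ub"
  have Hn: "H < 0" using hk unfolding H_def ub_def .
  define K4 where "K4 = a2 * k + c2 + 4 * c1 * ub"
  have K4p: "K4 > 0" unfolding K4_def using P ubp by (simp add: add_nonneg_pos)
  show ?thesis unfolding gas_positive_def
  proof (intro conjI allI impI)
    fix e :: real assume e: "e > 0"
    define \<rho> where "\<rho> = min (min ub (- H / (2 * K4))) (e / 2)"
    have "- H / (2 * K4) > 0" using Hn K4p by (intro divide_pos_pos) simp_all
    then have \<rho>p: "\<rho> > 0" unfolding \<rho>_def using ubp e by simp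
    have \<rho>ub: "\<rho> \<le> ub" unfolding \<rho>_def by simp
    have "\<rho> \<le> - H / (2 * K4)" unfolding \<rho>_def by simp
    then have "\<rho> * K4 \<le> (- H / (2 * K4)) * K4" using K4p by (intro mult_right_mono) simp_all
    also have "(- H / (2 * K4)) * K4 = - H / 2" using K4p by simp
    finally have \<rho>K: "\<rho> * K4 \<le> - H / 2" .
    have \<rho>e: "\<rho> \<le> e / 2" unfolding \<rho>_def by simp
    define l where "l = min (\<rho>^2) (e / 2)"
    have lp: "l > 0" unfolding l_def using \<rho>p e by simp
    define d where "d = min 1 (l / 2)"
    have dp: "d > 0" unfolding d_def using lp by simp
    show "\<exists>d>0. \<forall>u v. fear_solution a1 a2 b1 b2 c1 c2 k u v \<and> 0 < u 0 \<and> 0 < v 0 \<and>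
            dist (u 0, v 0) (a1 / b1, 0) < d \<longrightarrow> (\<forall>t\<ge>0. dist (u t, v t) (a1 / b1, 0) < e)"
    proof (intro exI[of _ d] conjI allI impI dp)
      fix u v t assume h: "fear_solution a1 a2 b1 b2 c1 c2 k u v \<and> 0 < u 0 \<and> 0 < v 0 \<and>
            dist (u 0, v 0) (a1 / b1, 0) < d" and t: "0 \<le> (t::real)"
      have sol: "fear_solution a1 a2 b1 b2 c1 c2 k u v" and u0: "u 0 > 0" and v0: "v 0 > 0"
        using h by auto
      have "dist (u 0) ub < d" using h dist_fst_le[of "(u 0, v 0)" "(a1 / b1, 0)"] unfolding ub_def by simp
      then have du0: "\<bar>u 0 - ub\<bar> < d" by (simp add: dist_real_def)
      have "dist (v 0) 0 < d" using h dist_snd_le[of "(u 0, v 0)" "(a1 / b1, 0)"] by simp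
      then have dv0: "v 0 < d" by (simp add: dist_real_def)
      have "(u 0 - ub)^2 = \<bar>u 0 - ub\<bar> * \<bar>u 0 - ub\<bar>" by (simp add: power2_eq_square)
      also have "\<dots> \<le> d * d" using du0 by (intro mult_mono) auto
      also have "\<dots> \<le> 1 * d" using dp unfolding d_def by (intro mult_right_mono) auto
      finally have "(u 0 - ub)^2 + v 0 < d + d" using dv0 by simp
      also have "d + d \<le> l" unfolding d_def by simp
      finally have L0: "(u 0 - a1 / b1)^2 + v 0 < l" unfolding ub_def .
      have rc: "\<rho> * (a2 * k + c2 + 4 * c1 * (a1 / b1)) \<le> - (a2 / (1 + k * (a1 / b1)) - c2 * (a1 / b1)) / 2"
        using \<rho>K unfolding K4_def H_def ub_def .
      have Lt: "(u t - a1 / b1)^2 + v t < l"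
        by (rule L_inv[OF P sol u0 v0 hk \<rho>p _ rc _ L0 t]) (use \<rho>ub l_def ub_def in auto)
      have vt: "v t > 0" using vpos[OF P sol u0 v0 t] .
      have l2: "l \<le> e / 2" unfolding l_def by simp
      have l1: "l \<le> (e / 2)^2"
        unfolding l_def using \<rho>e \<rho>p by (simp add: power_mono min.coboundedI1)
      have A: "(u t - a1 / b1)^2 < l" using Lt vt by simp
      have sq0: "(u t - a1 / b1)^2 \<ge> 0" by simp
      have vl: "v t \<le> l" using Lt sq0 by linarith
      have "(v t)^2 \<le> l^2" using vl vt by (intro power_mono) auto
      also have "l^2 \<le> (e / 2)^2" using l2 lp by (intro power_mono) auto
      finally have "(u t - a1 / b1)^2 + (v t)^2 < (e / 2)^2 + (e / 2)^2" using A l1 by simp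
      also have "\<dots> < e^2" using e by (simp add: power2_eq_square field_simps)
      finally have S: "(u t - a1 / b1)^2 + (v t)^2 < e^2" .
      have "dist (u t, v t) (a1 / b1, 0) = sqrt ((u t - a1 / b1)^2 + (v t)^2)"
        by (simp add: dist_Pair_Pair dist_real_def)
      also have "\<dots> < sqrt (e^2)" using S by (rule real_sqrt_less_mono)
      also have "\<dots> = e" using e by simp
      finally show "dist (u t, v t) (a1 / b1, 0) < e" .
    qed
  next
    fix u v assume h: "fear_solution a1 a2 b1 b2 c1 c2 k u v \<and> 0 < u 0 \<and> 0 < v 0"
    then show "((\<lambda>t. (u t, v t)) \<longlongrightarrow> (a1 / b1, 0)) at_top"
      using attract[OF P _ _ _ h1 hk] by blast
  qed
qed

end
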